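(* For $n\ge1$, choose a composition $X=(c_1,\dots,c_h)$ of $n$ uniformly at random among all $2^{n-1}$ compositions of $n$, and choose one of the $n$ unit elements uniformly at random, where the elements are arranged so that the first $c_1$ elements have rank 1, the next $c_2$ have rank 2, etc. Then the probability that the chosen element has rank $r$ is $\dfrac{1}{n\,2^{n-1}}\sum_{i=r}^n\binom{n}{i}$, and the expected rank is $(n+3)/4$.
   Context: A composition of $n$ is a sequence of positive integers $(c_1,\dots,c_h)$ with $c_1+\dots+c_h=n$. *)

theory Defs
  imports "HOL-Probability.Probability"
begin

definition compositions :: "nat \<Rightarrow> nat list set" where
  "compositions n = {cs. (\<forall>c\<in>set cs. 0 < c) \<and> sum_list cs = n}"

text \<open>Rank of unit element j (1-based, 1 \<le> j \<le> n) in composition cs: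
  the first c1 elements have rank 1, the next c2 rank 2, etc.
  That is, the least k with j \<le> c1 + ... + ck.\<close>
definition comp_rank :: "nat list \<Rightarrow> nat \<Rightarrow> nat" where
  "comp_rank cs j = (LEAST k. j \<le> sum_list (take k cs))"

end

theory Submission imports Defs begin

lemma comp_Nil: "compositions 0 = {[]}"
proof -
  have "cs = []" if "\<forall>c\<in>set cs. 0<c" "sum_list cs = 0" for cs :: "nat list"
    using that by (cases cs) auto
  then show ?thesis by (auto simp: compositions_def)
qed

lemma comp_one: "compositions 1 = {[1]}"
proof -
  have "cs = [1]" if "\<forall>c\<in>set cs. 0 < c" "sum_list cs = 1" for cs :: "nat list"
  proof (cases cs)
    case (Cons a list)
    have "list = []" using that Cons by (cases list) auto
    moreover have "a = 1" using that Cons calculation by auto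
    ultimately show ?thesis using Cons by simp
  qed (use that in auto)
  then show ?thesis by (auto simp: compositions_def)
qed

lemma comp_Suc: "compositions (Suc n) = Cons 1 ` compositions n \<union>
   (\<lambda>cs. Suc (hd cs) # tl cs) ` (compositions n - {[]})"
proof (intro equalityI subsetI)
  fix cs assume "cs \<in> compositions (Suc n)"
  then have pos: "\<forall>c\<in>set cs. 0 < c" and s: "sum_list cs = Suc n" by (auto simp: compositions_def)
  then obtain c rest where cs: "cs = c # rest" by (cases cs) auto
  show "cs \<in> Cons 1 ` compositions n \<union> (\<lambda>cs. Suc (hd cs) # tl cs) ` (compositions n - {[]})"
  proof (cases "c = 1")
    case True
    then have "rest \<in> compositions n" using pos s cs by (auto simp: compositions_def)
    then show ?thesis using cs True by auto
  next
    case False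
    then obtain c' where c': "c = Suc c'" "c' > 0" using pos cs by (cases c) auto
    then have "c' # rest \<in> compositions n - {[]}" using pos s cs by (auto simp: compositions_def)
    then show ?thesis using cs c' by (auto intro!: image_eqI[where x="c' # rest"])
  qed
next
  fix cs assume "cs \<in> Cons 1 ` compositions n \<union> (\<lambda>cs. Suc (hd cs) # tl cs) ` (compositions n - {[]})"
  then show "cs \<in> compositions (Suc n)"
  proof
    assume "cs \<in> Cons 1 ` compositions n" then show ?thesis by (auto simp: compositions_def)
  next
    assume "cs \<in> (\<lambda>cs. Suc (hd cs) # tl cs) ` (compositions n - {[]})"
    then obtain d where "d \<in> compositions n" "d \<noteq> []" "cs = Suc (hd d) # tl d" by auto
    then show ?thesis by (cases d) (auto simp: compositions_def)
  qed
qed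

lemma comp_nonempty: "n \<ge> 1 \<Longrightarrow> [] \<notin> compositions n"
  by (auto simp: compositions_def)

lemma comp_finite: "finite (compositions n)"
  by (induction n) (auto simp: comp_Nil comp_Suc)

lemma sum_comp_Suc:
  assumes "n \<ge> 1"
  shows "sum G (compositions (Suc n)) = sum (\<lambda>cs. G (1 # cs)) (compositions n)
          + sum (\<lambda>cs. G (Suc (hd cs) # tl cs)) (compositions n)"
proof -
  have e: "compositions n - {[]} = compositions n" using comp_nonempty[OF assms] by auto
  have i1: "inj_on (Cons 1) (compositions n)" by auto
  have i2: "inj_on (\<lambda>cs. Suc (hd cs) # tl cs) (compositions n)"
  proof (rule inj_onI)
    fix x y assume "x \<in> compositions n" "y \<in> compositions n" "Suc (hd x) # tl x = Suc (hd y) # tl y"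
    moreover have "x \<noteq> []" "y \<noteq> []" using calculation comp_nonempty[OF assms] by auto
    ultimately show "x = y" by (cases x; cases y) auto
  qed
  have h: "Suc (hd b) \<noteq> 1" if "b \<in> compositions n" for b
  proof -
    have "b \<noteq> []" using that comp_nonempty[OF assms] by auto
    then have "hd b \<in> set b" by simp
    then have "hd b > 0" using that by (auto simp: compositions_def)
    then show ?thesis by simp
  qed
  have d: "Cons 1 ` compositions n \<inter> (\<lambda>cs. Suc (hd cs) # tl cs) ` compositions n = {}"
  proof (rule equals0I)
    fix x assume "x \<in> Cons 1 ` compositions n \<inter> (\<lambda>cs. Suc (hd cs) # tl cs) ` compositions n"
    then obtain a b where "b \<in> compositions n" "x = 1 # a" "x = Suc (hd b) # tl b"
      by (auto simp only: image_iff Int_iff)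
    then show False using h[of b] by simp
  qed
  have "sum G (compositions (Suc n)) = sum G (Cons 1 ` compositions n) + sum G ((\<lambda>cs. Suc (hd cs) # tl cs) ` compositions n)"
    unfolding comp_Suc e by (rule sum.union_disjoint) (simp_all add: comp_finite d[simplified])
  also have "sum G (Cons 1 ` compositions n) = sum (\<lambda>cs. G (1 # cs)) (compositions n)"
    by (simp only: sum.reindex[OF i1] o_def)
  also have "sum G ((\<lambda>cs. Suc (hd cs) # tl cs) ` compositions n) = sum (\<lambda>cs. G (Suc (hd cs) # tl cs)) (compositions n)"
    by (simp only: sum.reindex[OF i2] o_def)
  finally show ?thesis .
qed

lemma card_comp: "n \<ge> 1 \<Longrightarrow> card (compositions n) = 2 ^ (n - 1)"
proof (induction n)
  case (Suc n)
  show ?case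
  proof (cases "n = 0")
    case True then show ?thesis using comp_one by simp
  next
    case False
    then have "card (compositions (Suc n)) = 2 * card (compositions n)"
      using sum_comp_Suc[of n "\<lambda>_. 1::nat"] by simp
    then show ?thesis using Suc False by (cases n) auto
  qed
qed simp

lemma rank_Cons:
  assumes "0 < j" "j \<le> c + sum_list cs"
  shows "comp_rank (c # cs) j = (if j \<le> c then 1 else Suc (comp_rank cs (j - c)))"
proof -
  have ex: "j \<le> sum_list (take (Suc (length cs)) (c # cs))" using assms by simp
  have "comp_rank (c # cs) j = Suc (LEAST m. j \<le> sum_list (take (Suc m) (c # cs)))"
    unfolding comp_rank_def by (rule Least_Suc[where P="\<lambda>k. j \<le> sum_list (take k (c # cs))", OF ex]) (use assms in simp)
  also have "\<dots> = Suc (LEAST m. j \<le> c + sum_list (take m cs))" by simp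
  also have "\<dots> = (if j \<le> c then 1 else Suc (comp_rank cs (j - c)))"
  proof (cases "j \<le> c")
    case True then show ?thesis by (simp add: Least_eq_0)
  next
    case False
    then have "(\<lambda>m. j \<le> c + sum_list (take m cs)) = (\<lambda>m. j - c \<le> sum_list (take m cs))" by auto
    then show ?thesis using False by (simp add: comp_rank_def)
  qed
  finally show ?thesis .
qed

lemma comp_sum: "cs \<in> compositions n \<Longrightarrow> sum_list cs = n"
  by (simp add: compositions_def)

lemma rank_pos:
  assumes "cs \<in> compositions n" "1 \<le> j" "j \<le> n"
  shows "comp_rank cs j \<ge> 1"
proof -
  from assms obtain c rest where cs: "cs = c # rest" by (cases cs) (auto simp: compositions_def)
  show ?thesis using rank_Cons[of j c rest] assms cs comp_sum[OF assms(1)] by auto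
qed

lemma sum_j_1:
  assumes "cs \<in> compositions n"
  shows "(\<Sum>j=1..Suc n. \<phi> (comp_rank (1 # cs) j)) = \<phi> 1 + (\<Sum>j=1..n. \<phi> (Suc (comp_rank cs j)))"
proof -
  have "(\<Sum>j=1..Suc n. \<phi> (comp_rank (1 # cs) j)) = \<phi> (comp_rank (1 # cs) 1) + (\<Sum>j=Suc 1..Suc n. \<phi> (comp_rank (1 # cs) j))"
    by (rule sum.atLeast_Suc_atMost) simp
  also have "(\<Sum>j=Suc 1..Suc n. \<phi> (comp_rank (1 # cs) j)) = (\<Sum>j=1..n. \<phi> (comp_rank (1 # cs) (Suc j)))"
    by (rule sum.shift_bounds_cl_Suc_ivl)
  also have "\<dots> = (\<Sum>j=1..n. \<phi> (Suc (comp_rank cs j)))"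
    by (rule sum.cong) (use rank_Cons[of _ 1 cs] comp_sum[OF assms] in auto)
  finally show ?thesis using rank_Cons[of 1 1 cs] by simp
qed

lemma sum_j_2:
  assumes "cs \<in> compositions n" "n \<ge> 1"
  shows "(\<Sum>j=1..Suc n. \<phi> (comp_rank (Suc (hd cs) # tl cs) j)) = \<phi> 1 + (\<Sum>j=1..n. \<phi> (comp_rank cs j))"
proof -
  from assms obtain c rest where cs: "cs = c # rest" by (cases cs) (auto simp: compositions_def)
  have c: "c \<ge> 1" using assms cs by (auto simp: compositions_def)
  have n: "n = c + sum_list rest" using comp_sum[OF assms(1)] cs by simp
  have "(\<Sum>j=1..Suc n. \<phi> (comp_rank (Suc c # rest) j)) = \<phi> (comp_rank (Suc c # rest) 1) + (\<Sum>j=Suc 1..Suc n. \<phi> (comp_rank (Suc c # rest) j))"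
    by (rule sum.atLeast_Suc_atMost) simp
  also have "(\<Sum>j=Suc 1..Suc n. \<phi> (comp_rank (Suc c # rest) j)) = (\<Sum>j=1..n. \<phi> (comp_rank (Suc c # rest) (Suc j)))"
    by (rule sum.shift_bounds_cl_Suc_ivl)
  also have "\<dots> = (\<Sum>j=1..n. \<phi> (comp_rank (c # rest) j))"
  proof (rule sum.cong)
    fix j assume j: "j \<in> {1..n}"
    show "\<phi> (comp_rank (Suc c # rest) (Suc j)) = \<phi> (comp_rank (c # rest) j)"
      using rank_Cons[of "Suc j" "Suc c" rest] rank_Cons[of j c rest] j n by auto
  qed simp
  finally show ?thesis using rank_Cons[of 1 "Suc c" rest] cs by simp
qed

lemma main_rec:
  assumes "n \<ge> 1"
  shows "(\<Sum>cs\<in>compositions (Suc n). \<Sum>j=1..Suc n. (\<phi> (comp_rank cs j) :: real))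
     = 2 ^ n * \<phi> 1 + (\<Sum>cs\<in>compositions n. \<Sum>j=1..n. \<phi> (Suc (comp_rank cs j)) + \<phi> (comp_rank cs j))"
proof -
  have "(\<Sum>cs\<in>compositions (Suc n). \<Sum>j=1..Suc n. (\<phi> (comp_rank cs j) :: real))
     = (\<Sum>cs\<in>compositions n. \<phi> 1 + (\<Sum>j=1..n. \<phi> (Suc (comp_rank cs j))))
       + (\<Sum>cs\<in>compositions n. \<phi> 1 + (\<Sum>j=1..n. \<phi> (comp_rank cs j)))"
    unfolding sum_comp_Suc[OF assms]
    by (intro arg_cong2[where f="(+)"] sum.cong) (simp_all only: sum_j_1 sum_j_2 assms)
  also have "\<dots> = 2 * real (card (compositions n)) * \<phi> 1 + (\<Sum>cs\<in>compositions n. \<Sum>j=1..n. \<phi> (Suc (comp_rank cs j)) + \<phi> (comp_rank cs j))"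
    by (simp add: sum.distrib algebra_simps)
  also have "2 * real (card (compositions n)) = 2 ^ n"
    using card_comp[OF assms] assms by (cases n) auto
  finally show ?thesis .
qed

definition S :: "nat \<Rightarrow> nat \<Rightarrow> nat" where "S n r = (\<Sum>i=r..n. n choose i)"

lemma S_0: "S n 0 = 2 ^ n"
  unfolding S_def using choose_row_sum[of n] by (simp add: atLeast0AtMost)

lemma S_Suc: "S (Suc n) (Suc k) = S n (Suc k) + S n k"
proof -
  have "S (Suc n) (Suc k) = (\<Sum>i=k..n. Suc n choose Suc i)"
    unfolding S_def by (rule sum.shift_bounds_cl_Suc_ivl)
  also have "\<dots> = (\<Sum>i=k..n. n choose i) + (\<Sum>i=k..n. n choose Suc i)"
    by (simp add: sum.distrib)
  also have "(\<Sum>i=k..n. n choose Suc i) = (\<Sum>i=Suc k..Suc n. n choose i)"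
    by (rule sum.shift_bounds_cl_Suc_ivl[symmetric])
  also have "\<dots> = S n (Suc k)"
  proof (cases "k \<le> n")
    case True
    then show ?thesis unfolding S_def by (simp add: sum.cl_ivl_Suc)
  next
    case False
    then show ?thesis unfolding S_def by simp
  qed
  finally show ?thesis unfolding S_def by simp
qed

lemma rank_one: "comp_rank [1] 1 = 1"
  using rank_Cons[of 1 1 "[]"] by simp

lemma count_rank:
  assumes "n \<ge> 1" "r \<ge> 1"
  shows "(\<Sum>cs\<in>compositions n. \<Sum>j=1..n. (if comp_rank cs j = r then 1 else 0 :: real)) = real (S n r)"
  using assms
proof (induction n arbitrary: r)
  case 0 then show ?case by simp
next
  case (Suc n)
  show ?case
  proof (cases "n = 0")
    case True
    have "S 1 r = (if r = 1 then 1 else 0)" using Suc.prems by (cases r) (auto simp: S_def)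
    then show ?thesis using True comp_one rank_one by simp
  next
    case False
    then have n1: "n \<ge> 1" by simp
    obtain k where k: "r = Suc k" using Suc.prems by (cases r) auto
    have "(\<Sum>cs\<in>compositions (Suc n). \<Sum>j=1..Suc n. (if comp_rank cs j = r then 1 else 0 :: real))
      = 2 ^ n * (if 1 = r then 1 else 0) + (\<Sum>cs\<in>compositions n. \<Sum>j=1..n. (if Suc (comp_rank cs j) = r then 1 else 0) + (if comp_rank cs j = r then 1 else 0))"
      by (rule main_rec[OF n1])
    also have "\<dots> = 2 ^ n * (if k = 0 then 1 else 0) + (\<Sum>cs\<in>compositions n. \<Sum>j=1..n. (if comp_rank cs j = k then 1 else 0))
         + (\<Sum>cs\<in>compositions n. \<Sum>j=1..n. (if comp_rank cs j = r then 1 else 0))"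
      by (simp add: sum.distrib k)
    also have "(\<Sum>cs\<in>compositions n. \<Sum>j=1..n. (if comp_rank cs j = k then 1 else 0)) = (if k = 0 then 0 else real (S n k))"
    proof (cases "k = 0")
      case True
      have "(\<Sum>cs\<in>compositions n. \<Sum>j=1..n. (if comp_rank cs j = k then 1 else 0 :: real)) = 0"
        by (rule sum.neutral, rule ballI, rule sum.neutral) (use rank_pos True in fastforce)
      then show ?thesis using True by simp
    next
      case False
      then show ?thesis using Suc.IH[OF n1] by simp
    qed
    also have "(\<Sum>cs\<in>compositions n. \<Sum>j=1..n. (if comp_rank cs j = r then 1 else 0)) = real (S n r)"
      using Suc.IH[OF n1] Suc.prems by simp
    finally show ?thesis using S_Suc[of n k] S_0[of n] k by (cases "k = 0") auto
  qed
qed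

lemma total_rank:
  assumes "n \<ge> 1"
  shows "4 * (\<Sum>cs\<in>compositions n. \<Sum>j=1..n. real (comp_rank cs j)) = real n * (real n + 3) * 2 ^ (n - 1)"
  using assms
proof (induction n)
  case 0 then show ?case by simp
next
  case (Suc n)
  show ?case
  proof (cases "n = 0")
    case True
    then show ?thesis using comp_one rank_one by simp
  next
    case False
    then have n1: "n \<ge> 1" by simp
    have "(\<Sum>cs\<in>compositions (Suc n). \<Sum>j=1..Suc n. real (comp_rank cs j))
      = 2 ^ n * real 1 + (\<Sum>cs\<in>compositions n. \<Sum>j=1..n. real (Suc (comp_rank cs j)) + real (comp_rank cs j))"
      by (rule main_rec[OF n1])
    also have "\<dots> = 2 ^ n + real (card (compositions n)) * real n + 2 * (\<Sum>cs\<in>compositions n. \<Sum>j=1..n. real (comp_rank cs j))"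
      by (simp add: sum.distrib algebra_simps sum_distrib_left)
    finally have "4 * (\<Sum>cs\<in>compositions (Suc n). \<Sum>j=1..Suc n. real (comp_rank cs j))
        = 4 * 2 ^ n + 4 * 2 ^ (n - 1) * real n + 2 * (real n * (real n + 3) * 2 ^ (n - 1))"
      using Suc.IH[OF n1] card_comp[OF n1] by (simp add: algebra_simps)
    also have "\<dots> = real (Suc n) * (real (Suc n) + 3) * 2 ^ (Suc n - 1)"
      using n1 by (cases n) (auto simp: algebra_simps)
    finally show ?thesis .
  qed
qed

lemma card_inter_sum:
  assumes "finite T"
  shows "real (card (T \<inter> X)) = (\<Sum>p\<in>T. if p \<in> X then 1 else 0)"
proof -
  have "real (card (T \<inter> X)) = (\<Sum>p\<in>T \<inter> X. 1::real)" by simp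
  also have "\<dots> = (\<Sum>p\<in>T. if p \<in> X then 1 else 0)" by (rule sum.inter_restrict[OF assms])
  finally show ?thesis .
qed

lemma pair_pmf_of_set:
  assumes "finite A" "A \<noteq> {}" "finite B" "B \<noteq> {}"
  shows "pair_pmf (pmf_of_set A) (pmf_of_set B) = pmf_of_set (A \<times> B)"
proof (rule pmf_eqI)
  fix x :: "'a \<times> 'b"
  show "pmf (pair_pmf (pmf_of_set A) (pmf_of_set B)) x = pmf (pmf_of_set (A \<times> B)) x"
    using assms by (cases x) (simp add: pmf_pair card_cartesian_product indicator_def)
qed

theorem mainTheorem5:
  fixes n r :: nat
  assumes "n \<ge> 1" and "r \<ge> 1"
  defines "M \<equiv> pair_pmf (pmf_of_set (compositions n)) (pmf_of_set {1..n})"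
  shows "measure_pmf.prob M {(cs, j). comp_rank cs j = r}
           = (\<Sum>i=r..n. real (n choose i)) / (real n * 2 ^ (n - 1))
         \<and> measure_pmf.expectation M (\<lambda>(cs, j). real (comp_rank cs j)) = (real n + 3) / 4"
proof -
  let ?C = "compositions n"
  have fin: "finite (?C \<times> {1..n})" using comp_finite by simp
  have ne: "?C \<times> {1..n} \<noteq> {}"
    using card_comp[OF assms(1)] assms(1) by (auto simp del: card_comp)
  have ne1: "?C \<noteq> {}" using ne by auto
  have M: "M = pmf_of_set (?C \<times> {1..n})"
    unfolding M_def using comp_finite ne1 assms(1) by (intro pair_pmf_of_set) auto
  have card: "real (card (?C \<times> {1..n})) = real n * 2 ^ (n - 1)"
    using card_comp[OF assms(1)] by (simp add: card_cartesian_product)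
  have "real (card ((?C \<times> {1..n}) \<inter> {(cs, j). comp_rank cs j = r}))
      = (\<Sum>p\<in>?C \<times> {1..n}. if p \<in> {(cs, j). comp_rank cs j = r} then 1 else 0)"
    by (rule card_inter_sum[OF fin])
  also have "\<dots> = (\<Sum>cs\<in>?C. \<Sum>j=1..n. (if comp_rank cs j = r then 1 else 0 :: real))"
    by (simp add: sum.cartesian_product case_prod_beta)
  also have "\<dots> = real (S n r)" by (rule count_rank[OF assms(1,2)])
  finally have c1: "real (card ((?C \<times> {1..n}) \<inter> {(cs, j). comp_rank cs j = r})) = real (S n r)" .
  have p: "measure_pmf.prob M {(cs, j). comp_rank cs j = r}
           = (\<Sum>i=r..n. real (n choose i)) / (real n * 2 ^ (n - 1))"
    unfolding M by (simp only: measure_pmf_of_set[OF ne fin] c1 card) (simp add: S_def)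
  have "measure_pmf.expectation M (\<lambda>(cs, j). real (comp_rank cs j))
      = (\<Sum>p\<in>?C \<times> {1..n}. (\<lambda>(cs, j). real (comp_rank cs j)) p) / (real n * 2 ^ (n - 1))"
    unfolding M by (simp only: integral_pmf_of_set[OF ne fin] card)
  also have "(\<Sum>p\<in>?C \<times> {1..n}. (\<lambda>(cs, j). real (comp_rank cs j)) p) = (\<Sum>cs\<in>?C. \<Sum>j=1..n. real (comp_rank cs j))"
    by (simp add: sum.cartesian_product)
  also have "\<dots> = real n * (real n + 3) * 2 ^ (n - 1) / 4" using total_rank[OF assms(1)] by simp
  finally have e: "measure_pmf.expectation M (\<lambda>(cs, j). real (comp_rank cs j)) = (real n + 3) / 4"
    using assms(1) by simp
  show ?thesis using p e by simp
qed

end
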